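(* Let $\omega$ be a primitive cube root of unity and assume $\alpha_1=\alpha_3=\alpha_4$. Let $(y(t),z(t))$ be the unique solution of the system (H), holomorphic near $t=-\omega^2$, with $y(-\omega^2)=-\omega^2$ and $z(-\omega^2)=\frac{2\omega+1}{3}\alpha_2$. Then $$y(t)=-\omega^2+(1-\alpha_0)(t+\omega^2)+\tfrac{1+2\omega}{3}\alpha_0(1-\alpha_0)(t+\omega^2)^2+O((t+\omega^2)^3),\quad z(t)=\tfrac{2\omega+1}{3}\alpha_2-\tfrac{\alpha_2}{3}(1-\alpha_0)(t+\omega^2)+O((t+\omega^2)^2),$$ and this solution is invariant under $\sigma_2\circ\sigma_1$: $$y\Big(\frac1{1-t}\Big)=\frac{1}{1-y(t)},\qquad z\Big(\frac1{1-t}\Big)=-(1-y(t))\big\{-z(t)(1-y(t))+\alpha_2\big\}.$$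
   Context: Fix complex parameters $\alpha_0,\dots,\alpha_4$ with $\alpha_0+\alpha_1+2\alpha_2+\alpha_3+\alpha_4=1$. The system (H) is $$t(t-1)\frac{dy}{dt}=2y(y-1)(y-t)z-(\alpha_0-1)y(y-1)-\alpha_3y(y-t)-\alpha_4(y-1)(y-t),$$ $$t(t-1)\frac{dz}{dt}=-\big(y(y-1)+(y-1)(y-t)+y(y-t)\big)z^2+\big((2y-1)(\alpha_0-1)+(2y-t)\alpha_3+(2y-t-1)\alpha_4\big)z-(\alpha_1+\alpha_2)\alpha_2.$$ The transformation $\sigma_2\circ\sigma_1$ is $t\mapsto\frac1{1-t}$, $y\mapsto\frac1{1-y}$, $z\mapsto-(1-y)(-z(1-y)+\alpha_2)$, with parameters $(\alpha_1,\alpha_3,\alpha_4)$ permuted cyclically; when $\alpha_1=\alpha_3=\alpha_4$ it maps solutions of (H) to solutions of (H). *)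

theory Defs
  imports "HOL-Analysis.Analysis" "HOL-Library.Landau_Symbols"
begin

text \<open>Right-hand side of the first equation of system (H):
  t(t-1) dy/dt = Hy a0 a3 a4 t y z.\<close>
definition Hy :: "complex \<Rightarrow> complex \<Rightarrow> complex \<Rightarrow> complex \<Rightarrow> complex \<Rightarrow> complex \<Rightarrow> complex" where
  "Hy a0 a3 a4 t y z =
     2 * y * (y - 1) * (y - t) * z - (a0 - 1) * y * (y - 1) - a3 * y * (y - t)
     - a4 * (y - 1) * (y - t)"

text \<open>Right-hand side of the second equation of system (H):
  t(t-1) dz/dt = Hz a0 a1 a2 a3 a4 t y z.\<close>
definition Hz :: "complex \<Rightarrow> complex \<Rightarrow> complex \<Rightarrow> complex \<Rightarrow> complex \<Rightarrow> complex \<Rightarrow> complex \<Rightarrow> complex \<Rightarrow> complex" where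
  "Hz a0 a1 a2 a3 a4 t y z =
     - (y * (y - 1) + (y - 1) * (y - t) + y * (y - t)) * z ^ 2
     + ((2 * y - 1) * (a0 - 1) + (2 * y - t) * a3 + (2 * y - t - 1) * a4) * z
     - (a1 + a2) * a2"

end

theory Submission
  imports Defs "HOL-Complex_Analysis.Complex_Analysis"
begin


definition Ay where "Ay a0 a3 a4 t y1 y2 z2 = 2 * z2 * (y1^2 + y1*y2 + y2^2 - (1+t)*(y1+y2) + t)
   - (a0-1)*(y1+y2-1) - a3*(y1+y2-t) - a4*(y1+y2-1-t)"
definition By where "By t y1 = 2*y1*(y1-1)*(y1-t)"
definition Az where "Az a0 a3 a4 t y1 y2 z2 = - (3*(y1+y2) - 2*(1+t))*z2^2 + 2*(a0-1+a3+a4)*z2"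
definition Bz where "Bz a0 a3 a4 t y1 z1 z2 = - (3*y1^2 - 2*(1+t)*y1 + t)*(z1+z2)
   + ((2*y1-1)*(a0-1)+(2*y1-t)*a3+(2*y1-t-1)*a4)"

lemma Hy_diff: "Hy a0 a3 a4 t y1 z1 - Hy a0 a3 a4 t y2 z2 =
   Ay a0 a3 a4 t y1 y2 z2 * (y1 - y2) + By t y1 * (z1 - z2)"
  unfolding Hy_def Ay_def By_def by (simp add: algebra_simps power2_eq_square)

lemma Hz_diff: "Hz a0 a1 a2 a3 a4 t y1 z1 - Hz a0 a1 a2 a3 a4 t y2 z2 =
   Az a0 a3 a4 t y1 y2 z2 * (y1 - y2) + Bz a0 a3 a4 t y1 z1 z2 * (z1 - z2)"
  unfolding Hz_def Az_def Bz_def by (simp add: algebra_simps power2_eq_square)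

lemma uniq:
  fixes y1 y2 z1 z2 :: "complex \<Rightarrow> complex"
  assumes S: "open S" "t0 \<in> S" and t0: "t0 \<noteq> 0" "t0 \<noteq> 1"
    and hol: "y1 holomorphic_on S" "y2 holomorphic_on S" "z1 holomorphic_on S" "z2 holomorphic_on S"
    and ode: "\<forall>t\<in>S. t * (t - 1) * deriv y1 t = Hy a0 a3 a4 t (y1 t) (z1 t)"
       "\<forall>t\<in>S. t * (t - 1) * deriv y2 t = Hy a0 a3 a4 t (y2 t) (z2 t)"
       "\<forall>t\<in>S. t * (t - 1) * deriv z1 t = Hz a0 a1 a2 a3 a4 t (y1 t) (z1 t)"
       "\<forall>t\<in>S. t * (t - 1) * deriv z2 t = Hz a0 a1 a2 a3 a4 t (y2 t) (z2 t)"
    and init: "y1 t0 = y2 t0" "z1 t0 = z2 t0"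
  shows "\<forall>\<^sub>F t in nhds t0. y1 t = y2 t \<and> z1 t = z2 t"
proof -
  obtain r0 where r0: "r0 > 0" "cball t0 r0 \<subseteq> S"
    using S open_contains_cball by blast
  define r where "r = min r0 (min (norm t0) (norm (t0 - 1)) / 2)"
  have rpos: "r > 0" using r0 t0 by (simp add: r_def)
  define K where "K = cball t0 r"
  have KS: "K \<subseteq> S" using r0 unfolding K_def r_def by auto
  have Knz: "t \<noteq> 0 \<and> t \<noteq> 1" if "t \<in> K" for t
  proof
    show "t \<noteq> 0"
    proof
      assume "t = 0"
      with that have "norm t0 \<le> r" by (simp add: K_def dist_norm)
      moreover have "r < norm t0" using t0 unfolding r_def by (smt (verit) min.absorb_iff2 zero_less_norm_iff field_sum_of_halves)
      ultimately show False by simp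
    qed
    show "t \<noteq> 1"
    proof
      assume "t = 1"
      with that have "norm (t0 - 1) \<le> r" by (simp add: K_def dist_norm norm_minus_commute)
      moreover have "r < norm (t0 - 1)" using t0 unfolding r_def by (smt (verit) min.absorb_iff2 zero_less_norm_iff right_minus_eq field_sum_of_halves)
      ultimately show False by simp
    qed
  qed
  have cont: "continuous_on K y1" "continuous_on K y2" "continuous_on K z1" "continuous_on K z2"
    using hol KS by (meson holomorphic_on_imp_continuous_on continuous_on_subset)+
  define cc where "cc t = norm (Ay a0 a3 a4 t (y1 t) (y2 t) (z2 t) / (t * (t - 1)))
     + norm (By t (y1 t) / (t * (t - 1)))
     + norm (Az a0 a3 a4 t (y1 t) (y2 t) (z2 t) / (t * (t - 1)))
     + norm (Bz a0 a3 a4 t (y1 t) (z1 t) (z2 t) / (t * (t - 1)))" for t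
  have "continuous_on K cc"
    unfolding cc_def Ay_def By_def Az_def Bz_def
    using cont Knz by (intro continuous_intros) auto
  then obtain tc where tc: "tc \<in> K" "\<forall>t\<in>K. cc t \<le> cc tc"
    using continuous_attains_sup[of K cc] rpos by (auto simp: K_def)
  define C where "C = cc tc + 1"
  have Cpos: "C > 0" unfolding C_def cc_def by (smt (verit) norm_ge_zero)
  have dy: "(y1 has_field_derivative deriv y1 t) (at t within A)"
           "(y2 has_field_derivative deriv y2 t) (at t within A)"
           "(z1 has_field_derivative deriv z1 t) (at t within A)"
           "(z2 has_field_derivative deriv z2 t) (at t within A)" if "t \<in> S" for t A
    using hol S that by (auto intro: holomorphic_derivI)
  have dbound: "norm (deriv y1 t - deriv y2 t) \<le> C * (norm (y1 t - y2 t) + norm (z1 t - z2 t)) \<and>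
                norm (deriv z1 t - deriv z2 t) \<le> C * (norm (y1 t - y2 t) + norm (z1 t - z2 t))"
    if tK: "t \<in> K" for t
  proof -
    have tS: "t \<in> S" using tK KS by auto
    have nz: "t * (t - 1) \<noteq> 0" using Knz[OF tK] by auto
    have e1: "deriv y1 t - deriv y2 t = Ay a0 a3 a4 t (y1 t) (y2 t) (z2 t) / (t * (t - 1)) * (y1 t - y2 t)
        + By t (y1 t) / (t * (t - 1)) * (z1 t - z2 t)"
    proof -
      have "t * (t - 1) * (deriv y1 t - deriv y2 t) = Hy a0 a3 a4 t (y1 t) (z1 t) - Hy a0 a3 a4 t (y2 t) (z2 t)"
        using ode tS by (simp add: right_diff_distrib)
      also have "\<dots> = Ay a0 a3 a4 t (y1 t) (y2 t) (z2 t) * (y1 t - y2 t) + By t (y1 t) * (z1 t - z2 t)"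
        by (rule Hy_diff)
      finally have F: "t * (t - 1) * (deriv y1 t - deriv y2 t) = Ay a0 a3 a4 t (y1 t) (y2 t) (z2 t) * (y1 t - y2 t) + By t (y1 t) * (z1 t - z2 t)" .
      have "deriv y1 t - deriv y2 t = (Ay a0 a3 a4 t (y1 t) (y2 t) (z2 t) * (y1 t - y2 t) + By t (y1 t) * (z1 t - z2 t)) / (t * (t - 1))"
        by (rule eq_divide_imp[OF nz]) (subst mult.commute, rule F)
      then show ?thesis by (simp add: add_divide_distrib)
    qed
    have e2: "deriv z1 t - deriv z2 t = Az a0 a3 a4 t (y1 t) (y2 t) (z2 t) / (t * (t - 1)) * (y1 t - y2 t)
        + Bz a0 a3 a4 t (y1 t) (z1 t) (z2 t) / (t * (t - 1)) * (z1 t - z2 t)"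
    proof -
      have "t * (t - 1) * (deriv z1 t - deriv z2 t) = Hz a0 a1 a2 a3 a4 t (y1 t) (z1 t) - Hz a0 a1 a2 a3 a4 t (y2 t) (z2 t)"
        using ode tS by (simp add: right_diff_distrib)
      also have "\<dots> = Az a0 a3 a4 t (y1 t) (y2 t) (z2 t) * (y1 t - y2 t) + Bz a0 a3 a4 t (y1 t) (z1 t) (z2 t) * (z1 t - z2 t)"
        by (rule Hz_diff)
      finally have F: "t * (t - 1) * (deriv z1 t - deriv z2 t) = Az a0 a3 a4 t (y1 t) (y2 t) (z2 t) * (y1 t - y2 t) + Bz a0 a3 a4 t (y1 t) (z1 t) (z2 t) * (z1 t - z2 t)" .
      have "deriv z1 t - deriv z2 t = (Az a0 a3 a4 t (y1 t) (y2 t) (z2 t) * (y1 t - y2 t) + Bz a0 a3 a4 t (y1 t) (z1 t) (z2 t) * (z1 t - z2 t)) / (t * (t - 1))"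
        by (rule eq_divide_imp[OF nz]) (subst mult.commute, rule F)
      then show ?thesis by (simp add: add_divide_distrib)
    qed
    have ccb: "cc t \<le> C" using tc tK unfolding C_def by auto
    define p where "p = norm (Ay a0 a3 a4 t (y1 t) (y2 t) (z2 t) / (t * (t - 1)))"
    define q where "q = norm (By t (y1 t) / (t * (t - 1)))"
    define p' where "p' = norm (Az a0 a3 a4 t (y1 t) (y2 t) (z2 t) / (t * (t - 1)))"
    define q' where "q' = norm (Bz a0 a3 a4 t (y1 t) (z1 t) (z2 t) / (t * (t - 1)))"
    have nn: "p \<ge> 0" "q \<ge> 0" "p' \<ge> 0" "q' \<ge> 0" unfolding p_def q_def p'_def q'_def by simp_all
    have "cc t = p + q + p' + q'" unfolding cc_def p_def q_def p'_def q'_def by simp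
    then have pq: "p \<le> C" "q \<le> C" "p' \<le> C" "q' \<le> C" using ccb nn by linarith+
    have "norm (deriv y1 t - deriv y2 t) \<le> p * norm (y1 t - y2 t) + q * norm (z1 t - z2 t)"
      unfolding e1 p_def q_def by (rule order_trans[OF norm_triangle_ineq]) (simp add: norm_mult norm_divide)
    also have "\<dots> \<le> C * norm (y1 t - y2 t) + C * norm (z1 t - z2 t)"
      using pq by (intro add_mono mult_right_mono) auto
    finally have 1: "norm (deriv y1 t - deriv y2 t) \<le> C * (norm (y1 t - y2 t) + norm (z1 t - z2 t))"
      by (simp add: distrib_left)
    have "norm (deriv z1 t - deriv z2 t) \<le> p' * norm (y1 t - y2 t) + q' * norm (z1 t - z2 t)"
      unfolding e2 p'_def q'_def by (rule order_trans[OF norm_triangle_ineq]) (simp add: norm_mult norm_divide)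
    also have "\<dots> \<le> C * norm (y1 t - y2 t) + C * norm (z1 t - z2 t)"
      using pq by (intro add_mono mult_right_mono) auto
    finally have 2: "norm (deriv z1 t - deriv z2 t) \<le> C * (norm (y1 t - y2 t) + norm (z1 t - z2 t))"
      by (simp add: distrib_left)
    show ?thesis using 1 2 by simp
  qed
  define \<rho> where "\<rho> = min r (1 / (4 * C))"
  have \<rho>pos: "\<rho> > 0" using rpos Cpos by (simp add: \<rho>_def)
  define K' where "K' = cball t0 \<rho>"
  have K'K: "K' \<subseteq> K" unfolding K'_def K_def \<rho>_def by auto
  define \<phi> where "\<phi> t = norm (y1 t - y2 t) + norm (z1 t - z2 t)" for t
  have "continuous_on K' \<phi>" unfolding \<phi>_def using cont K'K
    by (intro continuous_intros) (auto intro: continuous_on_subset)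
  then obtain tm where tm: "tm \<in> K'" "\<forall>t\<in>K'. \<phi> t \<le> \<phi> tm"
    using continuous_attains_sup[of K' \<phi>] \<rho>pos by (auto simp: K'_def)
  define N where "N = \<phi> tm"
  have Nnn: "N \<ge> 0" unfolding N_def \<phi>_def by simp
  have t0K': "t0 \<in> K'" using \<rho>pos by (simp add: K'_def)
  have CN\<rho>: "C * N * \<rho> \<le> N / 4"
  proof -
    have "\<rho> \<le> 1 / (4 * C)" by (simp add: \<rho>_def)
    then have "C * \<rho> \<le> C * (1 / (4 * C))" using Cpos by (intro mult_left_mono) auto
    also have "\<dots> = 1/4" using Cpos by simp
    finally have "C * \<rho> \<le> 1/4" .
    then have "C * \<rho> * N \<le> 1/4 * N" using Nnn by (intro mult_right_mono) auto
    then show ?thesis by (simp add: algebra_simps)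
  qed
  have bnd: "\<phi> t \<le> N / 2" if tK': "t \<in> K'" for t
  proof -
    have db: "norm (deriv y1 s - deriv y2 s) \<le> C * N \<and> norm (deriv z1 s - deriv z2 s) \<le> C * N"
      if "s \<in> K'" for s
    proof -
      have "\<phi> s \<le> N" using tm that N_def by auto
      then have "C * \<phi> s \<le> C * N" using Cpos by simp
      moreover have "s \<in> K" using that K'K by auto
      ultimately show ?thesis using dbound[of s] unfolding \<phi>_def by linarith
    qed
    have dist: "norm (t - t0) \<le> \<rho>" using tK' by (simp add: K'_def dist_norm norm_minus_commute)
    have "norm ((y1 t - y2 t) - (y1 t0 - y2 t0)) \<le> C * N * norm (t - t0)"
    proof (rule field_differentiable_bound[of K' "\<lambda>t. y1 t - y2 t" "\<lambda>s. deriv y1 s - deriv y2 s"])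
      show "convex K'" by (simp add: K'_def)
      fix s assume "s \<in> K'"
      then have "s \<in> S" using K'K KS by auto
      then show "((\<lambda>t. y1 t - y2 t) has_field_derivative deriv y1 s - deriv y2 s) (at s within K')"
        using dy by (intro derivative_intros) auto
      show "norm (deriv y1 s - deriv y2 s) \<le> C * N" using db \<open>s \<in> K'\<close> by auto
    qed (use tK' t0K' in auto)
    also have "\<dots> \<le> C * N * \<rho>" using dist Cpos Nnn by (intro mult_left_mono) auto
    finally have 1: "norm (y1 t - y2 t) \<le> N / 4" using CN\<rho> init by simp
    have "norm ((z1 t - z2 t) - (z1 t0 - z2 t0)) \<le> C * N * norm (t - t0)"
    proof (rule field_differentiable_bound[of K' "\<lambda>t. z1 t - z2 t" "\<lambda>s. deriv z1 s - deriv z2 s"])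
      show "convex K'" by (simp add: K'_def)
      fix s assume "s \<in> K'"
      then have "s \<in> S" using K'K KS by auto
      then show "((\<lambda>t. z1 t - z2 t) has_field_derivative deriv z1 s - deriv z2 s) (at s within K')"
        using dy by (intro derivative_intros) auto
      show "norm (deriv z1 s - deriv z2 s) \<le> C * N" using db \<open>s \<in> K'\<close> by auto
    qed (use tK' t0K' in auto)
    also have "\<dots> \<le> C * N * \<rho>" using dist Cpos Nnn by (intro mult_left_mono) auto
    finally have 2: "norm (z1 t - z2 t) \<le> N / 4" using CN\<rho> init by simp
    show ?thesis using 1 2 unfolding \<phi>_def by simp
  qed
  have "N \<le> N / 2" using bnd[OF tm(1)] N_def by simp
  then have N0: "N = 0" using Nnn by simp
  have "\<forall>t\<in>ball t0 \<rho>. y1 t = y2 t \<and> z1 t = z2 t"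
  proof
    fix t assume "t \<in> ball t0 \<rho>"
    then have "t \<in> K'" by (simp add: K'_def)
    then have "\<phi> t \<le> 0" using tm N_def N0 by auto
    then have "norm (y1 t - y2 t) \<le> 0" "norm (z1 t - z2 t) \<le> 0" unfolding \<phi>_def
      using norm_ge_zero[of "y1 t - y2 t"] norm_ge_zero[of "z1 t - z2 t"] by linarith+
    then show "y1 t = y2 t \<and> z1 t = z2 t" by simp
  qed
  then show ?thesis unfolding eventually_nhds using \<rho>pos by (intro exI[of _ "ball t0 \<rho>"]) auto
qed


lemma alg_y1:
  fixes \<omega> a0 a a2 :: complex
  assumes w: "\<omega>^2 + \<omega> + 1 = 0"
  shows "- Hy a0 a a (-(\<omega>^2)) (-(\<omega>^2)) ((2*\<omega>+1)/3*a2) = 1 - a0"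
proof -
  have "\<omega>^4 = \<omega>^2 * \<omega>^2" by algebra
  show ?thesis unfolding Hy_def using w by algebra
qed

lemma alg_z1:
  fixes \<omega> a0 a a2 :: complex
  assumes w: "\<omega>^2 + \<omega> + 1 = 0" and a: "a0 + a + 2*a2 + a + a = 1"
  shows "- Hz a0 a a2 a a (-(\<omega>^2)) (-(\<omega>^2)) ((2*\<omega>+1)/3*a2) = - a2/3 * (1 - a0)"
proof -
  have "3 * (- Hz a0 a a2 a a (-(\<omega>^2)) (-(\<omega>^2)) ((2*\<omega>+1)/3*a2)) = 3 * (- a2/3 * (1 - a0))"
    unfolding Hz_def using w a by (simp add: field_simps) algebra
  then show ?thesis by (simp add: mult.commute)
qed

lemma alg_symY:
  fixes s c w yp a0 a a2 :: complex
  assumes s: "s \<noteq> 0" "s \<noteq> 1" and c: "c \<noteq> 0" and a: "a0 + a + 2*a2 + a + a = 1"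
    and yp: "(1 - 1/s) * ((1 - 1/s) - 1) * yp = Hy a0 a a (1 - 1/s) (1 - c) w"
  shows "s * (s - 1) * (yp / s^2 / c^2) = Hy a0 a a s (1/c) (c^2*w - a2*c)"
proof -
  have s': "s - 1 \<noteq> 0" using s by simp
  from yp have yp': "yp = -(s^2) * Hy a0 a a (1 - 1/s) (1 - c) w / (s - 1)"
    using s s' by (simp add: field_simps power2_eq_square) 
  show ?thesis unfolding yp' Hy_def using s s' c a by (simp add: field_simps) algebra
qed

lemma alg_symZ_poly:
  fixes s c w yp zp a a2 p q d :: complex
  assumes ps: "p * s = 1" and qs: "q * (s - 1) = 1" and dc: "d * c = 1"
    and yp: "yp = -(s^2) * Hy (1 - 3*a - 2*a2) a a (1 - p) (1 - c) w * q"
    and zp: "zp = -(s^2) * Hz (1 - 3*a - 2*a2) a a2 a a (1 - p) (1 - c) w * q"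
  shows "s * (s - 1) * (-2*c*(yp*p^2)*w + c^2*(zp*p^2) + a2*(yp*p^2))
      = Hz (1 - 3*a - 2*a2) a a2 a a s d (c^2*w - a2*c)"
  unfolding yp zp Hy_def Hz_def using ps qs dc by algebra

lemma alg_symZ:
  fixes s c w yp zp a0 a a2 :: complex
  assumes s: "s \<noteq> 0" "s \<noteq> 1" and c: "c \<noteq> 0" and a: "a0 + a + 2*a2 + a + a = 1"
    and yp: "(1 - 1/s) * ((1 - 1/s) - 1) * yp = Hy a0 a a (1 - 1/s) (1 - c) w"
    and zp: "(1 - 1/s) * ((1 - 1/s) - 1) * zp = Hz a0 a a2 a a (1 - 1/s) (1 - c) w"
  shows "s * (s - 1) * (-2*c*(yp/s^2)*w + c^2*(zp/s^2) + a2*(yp/s^2))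
      = Hz a0 a a2 a a s (1/c) (c^2*w - a2*c)"
proof -
  have s': "s - 1 \<noteq> 0" using s by simp
  have a0: "a0 = 1 - 3*a - 2*a2" using a by (simp add: algebra_simps)
  from yp have yp': "yp = -(s^2) * Hy a0 a a (1 - 1/s) (1 - c) w * (1/(s - 1))"
    using s s' by (simp add: field_simps power2_eq_square) 
  from zp have zp': "zp = -(s^2) * Hz a0 a a2 a a (1 - 1/s) (1 - c) w * (1/(s - 1))"
    using s s' by (simp add: field_simps power2_eq_square) 
  have "s * (s - 1) * (-2*c*(yp*(1/s)^2)*w + c^2*(zp*(1/s)^2) + a2*(yp*(1/s)^2))
      = Hz (1 - 3*a - 2*a2) a a2 a a s (1/c) (c^2*w - a2*c)"
    by (rule alg_symZ_poly[where q="1/(s-1)"]) (use s s' c yp' zp' a0 in auto)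
  then show ?thesis using a0 by (simp add: power_divide)
qed


definition HyT where "HyT a3 a4 t y z = -2*y*(y-1)*z + a3*y + a4*(y-1)"
definition HyY where "HyY a0 a3 a4 t y z = 2*z*((y-1)*(y-t) + y*(y-t) + y*(y-1))
   - (a0-1)*(2*y-1) - a3*(2*y-t) - a4*(2*y-1-t)"
definition HyZ where "HyZ t y = 2*y*(y-1)*(y-t)"

lemma Hy_comp_deriv:
  assumes f: "(f has_field_derivative f') (at x)" and g: "(g has_field_derivative g') (at x)"
  shows "((\<lambda>t. Hy a0 a3 a4 t (f t) (g t)) has_field_derivative
     (HyT a3 a4 x (f x) (g x) + HyY a0 a3 a4 x (f x) (g x) * f' + HyZ x (f x) * g')) (at x)"
  unfolding Hy_def HyT_def HyY_def HyZ_def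
  by (rule derivative_eq_intros f g refl | simp)+ (simp add: algebra_simps)

lemma alg_y2:
  fixes \<omega> a0 a a2 :: complex
  assumes w: "\<omega>^2 + \<omega> + 1 = 0" and a: "a0 + a + 2*a2 + a + a = 1"
  shows "((HyT a a (-(\<omega>^2)) (-(\<omega>^2)) ((2*\<omega>+1)/3*a2)
        + HyY a0 a a (-(\<omega>^2)) (-(\<omega>^2)) ((2*\<omega>+1)/3*a2) * (1 - a0)
        + HyZ (-(\<omega>^2)) (-(\<omega>^2)) * (- a2/3 * (1 - a0))) * (-1)
        - Hy a0 a a (-(\<omega>^2)) (-(\<omega>^2)) ((2*\<omega>+1)/3*a2) * (2 * (-(\<omega>^2)) - 1)) / ((-1) * (-1))
      = 2 * ((1 + 2*\<omega>)/3 * a0 * (1 - a0))"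
proof -
  have a0: "a0 = 1 - 3*a - 2*a2" using a by (simp add: algebra_simps)
  have "3 * (((HyT a a (-(\<omega>^2)) (-(\<omega>^2)) ((2*\<omega>+1)/3*a2)
        + HyY a0 a a (-(\<omega>^2)) (-(\<omega>^2)) ((2*\<omega>+1)/3*a2) * (1 - a0)
        + HyZ (-(\<omega>^2)) (-(\<omega>^2)) * (- a2/3 * (1 - a0))) * (-1)
        - Hy a0 a a (-(\<omega>^2)) (-(\<omega>^2)) ((2*\<omega>+1)/3*a2) * (2 * (-(\<omega>^2)) - 1)) / ((-1) * (-1)))
      = 3 * (2 * ((1 + 2*\<omega>)/3 * a0 * (1 - a0)))"
    unfolding Hy_def HyT_def HyY_def HyZ_def a0 using w by (simp add: field_simps) algebra
  then show ?thesis by (metis mult_left_cancel zero_neq_numeral)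
qed

lemma alg_Z0:
  fixes \<omega> a2 :: complex
  assumes w: "\<omega>^2 + \<omega> + 1 = 0"
  shows "(1 - (-(\<omega>^2)))^2 * ((2*\<omega>+1)/3*a2) - a2 * (1 - (-(\<omega>^2))) = (2*\<omega>+1)/3*a2"
proof -
  have "3 * ((1 - (-(\<omega>^2)))^2 * ((2*\<omega>+1)/3*a2) - a2 * (1 - (-(\<omega>^2)))) = 3 * ((2*\<omega>+1)/3*a2)"
    using w by (simp add: field_simps) algebra
  then show ?thesis by (metis mult_left_cancel zero_neq_numeral)
qed

lemma taylor_bigo:
  fixes f :: "complex \<Rightarrow> complex"
  assumes hol: "f holomorphic_on S" and S: "open S" "x0 \<in> S"
  shows "(\<lambda>t. f t - (\<Sum>i\<le>n. (deriv^^i) f x0 * (t - x0)^i / fact i)) \<in> O[at x0](\<lambda>t. (t - x0)^(Suc n))"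
proof -
  obtain r where r: "r > 0" "cball x0 r \<subseteq> S" using S open_contains_cball by blast
  define K where "K = cball x0 r"
  have holn: "(deriv^^i) f holomorphic_on S" for i using hol S(1) by (rule holomorphic_higher_deriv)
  have "continuous_on K ((deriv^^(Suc n)) f)"
    unfolding K_def by (rule continuous_on_subset[OF holomorphic_on_imp_continuous_on[OF holn] r(2)])
  then have "continuous_on K (\<lambda>x. norm ((deriv^^(Suc n)) f x))" by (intro continuous_intros)
  then obtain xm where xm: "xm \<in> K" "\<forall>x\<in>K. norm ((deriv^^(Suc n)) f x) \<le> norm ((deriv^^(Suc n)) f xm)"
    using continuous_attains_sup[of K "\<lambda>x. norm ((deriv^^(Suc n)) f x)"] r by (auto simp: K_def)
  define B where "B = norm ((deriv^^(Suc n)) f xm)"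
  have main: "norm (f t - (\<Sum>i\<le>n. (deriv^^i) f x0 * (t - x0)^i / fact i)) \<le> B * norm (t - x0)^(Suc n) / fact n"
    if "t \<in> K" for t
  proof -
    have "norm ((deriv^^0) f t - (\<Sum>i\<le>n. (deriv^^i) f x0 * (t - x0)^i / fact i)) \<le> B * norm (t - x0)^(Suc n) / fact n"
    proof (rule complex_Taylor[of K n "\<lambda>i. (deriv^^i) f"])
      show "convex K" by (simp add: K_def)
      fix i x assume "x \<in> K" "i \<le> n"
      then have "x \<in> S" using r K_def by auto
      then have "((deriv^^i) f has_field_derivative deriv ((deriv^^i) f) x) (at x within K)"
        by (rule holomorphic_derivI[OF holn S(1)])
      then show "((deriv^^i) f has_field_derivative (deriv^^(Suc i)) f x) (at x within K)"
        by (simp only: funpow.simps(2) comp_apply)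
    next
      fix x assume "x \<in> K" then show "norm ((deriv^^(Suc n)) f x) \<le> B" using xm B_def by auto
    next
      show "x0 \<in> K" using r by (simp add: K_def)
    next
      show "t \<in> K" by (rule that)
    qed
    then show ?thesis by simp
  qed
  have ev: "\<forall>\<^sub>F t in at x0. t \<in> K"
    using eventually_at_ball[OF r(1), of x0 UNIV] by eventually_elim (auto simp: K_def)
  show ?thesis
  proof (rule bigoI[where c = "B / fact n"])
    show "\<forall>\<^sub>F t in at x0. norm (f t - (\<Sum>i\<le>n. (deriv^^i) f x0 * (t - x0)^i / fact i)) \<le> B / fact n * norm ((t - x0)^(Suc n))"
      using ev
    proof eventually_elim
      case (elim t)
      from main[OF elim] show ?case by (simp add: norm_power norm_mult)
    qed
  qed
qed



lemma deriv_h: fixes s :: complex assumes "s \<noteq> 0" shows "((\<lambda>s. 1 - 1 / s) has_field_derivative 1 / s^2) (at s)"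
proof -
  have "((\<lambda>s. 1 - 1 / s) has_field_derivative (0 - (0 * s - 1 * 1) / (s * s))) (at s)"
    using assms by (intro derivative_intros) auto
  then show ?thesis by (simp add: power2_eq_square)
qed

lemma deriv_Y: fixes s :: complex and g :: "complex \<Rightarrow> complex"
  assumes yh: "(g has_field_derivative g') (at s)" and c: "1 - g s \<noteq> 0"
  shows "((\<lambda>s. 1 / (1 - g s)) has_field_derivative g' / (1 - g s)^2) (at s)"
proof -
  have "((\<lambda>s. 1 / (1 - g s)) has_field_derivative (0 * (1 - g s) - 1 * (0 - g')) / ((1 - g s) * (1 - g s))) (at s)"
    using c by (intro derivative_intros yh) auto
  then show ?thesis by (simp add: power2_eq_square)
qed

lemma deriv_Z: fixes s a2 :: complex and g k :: "complex \<Rightarrow> complex"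
  assumes yh: "(g has_field_derivative g') (at s)" and zh: "(k has_field_derivative k') (at s)"
  shows "((\<lambda>s. (1 - g s)^2 * k s - a2 * (1 - g s)) has_field_derivative
     -2 * (1 - g s) * g' * k s + (1 - g s)^2 * k' + a2 * g') (at s)"
  by (rule derivative_eq_intros yh zh refl)+ (simp add: algebra_simps power2_eq_square)

theorem proposition3:
  fixes a0 a1 a2 a3 a4 \<omega> :: complex
    and y z :: "complex \<Rightarrow> complex"
    and S :: "complex set"
  assumes "a0 + a1 + 2 * a2 + a3 + a4 = 1"
    and "a1 = a3" and "a3 = a4"
    and "\<omega> ^ 3 = 1" and "\<omega> \<noteq> 1"
    and "open S" and "- (\<omega> ^ 2) \<in> S"
    and "y holomorphic_on S" and "z holomorphic_on S"
    and "\<forall>t\<in>S. t * (t - 1) * deriv y t = Hy a0 a3 a4 t (y t) (z t)"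
    and "\<forall>t\<in>S. t * (t - 1) * deriv z t = Hz a0 a1 a2 a3 a4 t (y t) (z t)"
    and "y (- (\<omega> ^ 2)) = - (\<omega> ^ 2)"
    and "z (- (\<omega> ^ 2)) = (2 * \<omega> + 1) / 3 * a2"
  shows "(\<lambda>t. y t - (- (\<omega> ^ 2) + (1 - a0) * (t + \<omega> ^ 2)
                 + (1 + 2 * \<omega>) / 3 * a0 * (1 - a0) * (t + \<omega> ^ 2) ^ 2))
           \<in> O[at (- (\<omega> ^ 2))](\<lambda>t. (t + \<omega> ^ 2) ^ 3) \<and>
         (\<lambda>t. z t - ((2 * \<omega> + 1) / 3 * a2 - a2 / 3 * (1 - a0) * (t + \<omega> ^ 2)))
           \<in> O[at (- (\<omega> ^ 2))](\<lambda>t. (t + \<omega> ^ 2) ^ 2) \<and>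
         (\<forall>\<^sub>F t in nhds (- (\<omega> ^ 2)).
           y (1 / (1 - t)) = 1 / (1 - y t) \<and>
           z (1 / (1 - t)) = - (1 - y t) * (- z t * (1 - y t) + a2))"
proof -
  note S = assms(6,7)
  note hol = assms(8,9)
  define t0 where "t0 = - (\<omega> ^ 2)"
  define z0 where "z0 = (2 * \<omega> + 1) / 3 * a2"
  have a1: "a1 = a3" and a4: "a4 = a3" using assms(2,3) by simp_all
  have a: "a0 + a3 + 2*a2 + a3 + a3 = 1" using assms(1) a1 a4 by simp
  have odey: "\<forall>t\<in>S. t * (t - 1) * deriv y t = Hy a0 a3 a3 t (y t) (z t)" using assms(10) a4 by simp
  have odez: "\<forall>t\<in>S. t * (t - 1) * deriv z t = Hz a0 a3 a2 a3 a3 t (y t) (z t)" using assms(11) a1 a4 by simp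
  have w: "\<omega>^2 + \<omega> + 1 = 0"
  proof -
    have "(\<omega> - 1) * (\<omega>^2 + \<omega> + 1) = \<omega>^3 - 1" by algebra
    then have "(\<omega> - 1) * (\<omega>^2 + \<omega> + 1) = 0" using assms(4) by simp
    then show ?thesis using assms(5) by simp
  qed
  have tt: "t0 * (t0 - 1) = -1" unfolding t0_def using w by algebra
  have t0nz: "t0 \<noteq> 0" "t0 \<noteq> 1" using tt by auto
  have t0S: "t0 \<in> S" using S t0_def by simp
  have yt0: "y t0 = t0" and zt0: "z t0 = z0" using assms(12,13) unfolding t0_def z0_def by simp_all
  have dy0: "deriv y t0 = 1 - a0"
  proof -
    have "t0 * (t0 - 1) * deriv y t0 = Hy a0 a3 a3 t0 t0 z0" using odey t0S by (simp add: yt0 zt0)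
    then have 1: "- deriv y t0 = Hy a0 a3 a3 t0 t0 z0" using tt by simp
    have 2: "- Hy a0 a3 a3 t0 t0 z0 = 1 - a0" unfolding t0_def z0_def by (rule alg_y1[OF w])
    show ?thesis using 1 2 by (metis minus_minus)
  qed
  have dz0: "deriv z t0 = - a2/3 * (1 - a0)"
  proof -
    have "t0 * (t0 - 1) * deriv z t0 = Hz a0 a3 a2 a3 a3 t0 t0 z0" using odez t0S by (simp add: yt0 zt0)
    then have 1: "- deriv z t0 = Hz a0 a3 a2 a3 a3 t0 t0 z0" using tt by simp
    have 2: "- Hz a0 a3 a2 a3 a3 t0 t0 z0 = - a2/3 * (1 - a0)" unfolding t0_def z0_def by (rule alg_z1[OF w a])
    show ?thesis using 1 2 by (metis minus_minus)
  qed
  have Dy: "(y has_field_derivative deriv y t) (at t)" "(z has_field_derivative deriv z t) (at t)"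
    if "t \<in> S" for t using hol S(1) that by (auto intro: holomorphic_derivI)
  have ddy0: "deriv (deriv y) t0 = 2 * ((1 + 2*\<omega>)/3 * a0 * (1 - a0))"
  proof -
    have ev: "\<forall>\<^sub>F t in nhds t0. deriv y t = Hy a0 a3 a3 t (y t) (z t) / (t * (t - 1))"
    proof -
      have "\<forall>\<^sub>F t in nhds t0. t \<in> S \<and> t \<noteq> 0 \<and> t \<noteq> 1"
        using eventually_nhds_in_open[OF S(1) t0S] t1_space_nhds[OF t0nz(1)] t1_space_nhds[OF t0nz(2)]
        by eventually_elim auto
      then show ?thesis
      proof eventually_elim
        case (elim t)
        then have "t * (t - 1) \<noteq> 0" by simp
        then show ?case using odey elim by (simp add: eq_divide_eq mult.commute)
      qed
    qed
    have "((\<lambda>t. Hy a0 a3 a3 t (y t) (z t) / (t * (t - 1))) has_field_derivative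
        ((HyT a3 a3 t0 (y t0) (z t0) + HyY a0 a3 a3 t0 (y t0) (z t0) * deriv y t0 + HyZ t0 (y t0) * deriv z t0)
          * (t0 * (t0 - 1)) - Hy a0 a3 a3 t0 (y t0) (z t0) * (2 * t0 - 1)) / ((t0 * (t0 - 1)) * (t0 * (t0 - 1)))) (at t0)"
    proof (rule DERIV_divide)
      show "((\<lambda>t. Hy a0 a3 a3 t (y t) (z t)) has_field_derivative
        HyT a3 a3 t0 (y t0) (z t0) + HyY a0 a3 a3 t0 (y t0) (z t0) * deriv y t0 + HyZ t0 (y t0) * deriv z t0) (at t0)"
        by (rule Hy_comp_deriv[OF Dy[OF t0S]])
      show "((\<lambda>t. t * (t - 1)) has_field_derivative 2 * t0 - 1) (at t0)"
        by (rule derivative_eq_intros refl | simp add: algebra_simps)+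
      show "t0 * (t0 - 1) \<noteq> 0" using tt by simp
    qed
    then have "deriv (\<lambda>t. Hy a0 a3 a3 t (y t) (z t) / (t * (t - 1))) t0 =
        ((HyT a3 a3 t0 (y t0) (z t0) + HyY a0 a3 a3 t0 (y t0) (z t0) * deriv y t0 + HyZ t0 (y t0) * deriv z t0)
          * (t0 * (t0 - 1)) - Hy a0 a3 a3 t0 (y t0) (z t0) * (2 * t0 - 1)) / ((t0 * (t0 - 1)) * (t0 * (t0 - 1)))"
      by (rule DERIV_imp_deriv)
    also have "\<dots> = 2 * ((1 + 2*\<omega>)/3 * a0 * (1 - a0))"
      unfolding tt dy0 dz0 yt0 zt0 unfolding t0_def z0_def by (rule alg_y2[OF w a])
    finally show ?thesis using deriv_cong_ev[OF ev refl] by simp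
  qed
  have part1: "(\<lambda>t. y t - (- (\<omega> ^ 2) + (1 - a0) * (t + \<omega> ^ 2)
                 + (1 + 2 * \<omega>) / 3 * a0 * (1 - a0) * (t + \<omega> ^ 2) ^ 2))
           \<in> O[at (- (\<omega> ^ 2))](\<lambda>t. (t + \<omega> ^ 2) ^ 3)"
  proof -
    have "(\<lambda>t. y t - (\<Sum>i\<le>2. (deriv^^i) y t0 * (t - t0)^i / fact i)) \<in> O[at t0](\<lambda>t. (t - t0)^(Suc 2))"
      by (rule taylor_bigo[OF hol(1) S(1) t0S])
    moreover have "(\<lambda>t. y t - (\<Sum>i\<le>2. (deriv^^i) y t0 * (t - t0)^i / fact i)) =
        (\<lambda>t. y t - (- (\<omega> ^ 2) + (1 - a0) * (t + \<omega> ^ 2)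
                 + (1 + 2 * \<omega>) / 3 * a0 * (1 - a0) * (t + \<omega> ^ 2) ^ 2))"
    proof
      fix t
      have "(\<Sum>i\<le>2. (deriv^^i) y t0 * (t - t0)^i / fact i) = y t0 + deriv y t0 * (t - t0) + deriv (deriv y) t0 * (t - t0)^2 / 2"
        by (simp add: numeral_2_eq_2)
      then show "y t - (\<Sum>i\<le>2. (deriv^^i) y t0 * (t - t0)^i / fact i) = y t - (- (\<omega> ^ 2) + (1 - a0) * (t + \<omega> ^ 2)
                 + (1 + 2 * \<omega>) / 3 * a0 * (1 - a0) * (t + \<omega> ^ 2) ^ 2)"
        using yt0 dy0 ddy0 by (simp add: t0_def)
    qed
    moreover have "(\<lambda>t. (t - t0)^(Suc 2)) = (\<lambda>t. (t + \<omega> ^ 2) ^ 3)"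
      by (simp add: t0_def numeral_3_eq_3)
    ultimately show ?thesis by (simp add: t0_def)
  qed
  have part2: "(\<lambda>t. z t - ((2 * \<omega> + 1) / 3 * a2 - a2 / 3 * (1 - a0) * (t + \<omega> ^ 2)))
           \<in> O[at (- (\<omega> ^ 2))](\<lambda>t. (t + \<omega> ^ 2) ^ 2)"
  proof -
    have "(\<lambda>t. z t - (\<Sum>i\<le>1. (deriv^^i) z t0 * (t - t0)^i / fact i)) \<in> O[at t0](\<lambda>t. (t - t0)^(Suc 1))"
      by (rule taylor_bigo[OF hol(2) S(1) t0S])
    moreover have "(\<lambda>t. z t - (\<Sum>i\<le>1. (deriv^^i) z t0 * (t - t0)^i / fact i)) =
        (\<lambda>t. z t - ((2 * \<omega> + 1) / 3 * a2 - a2 / 3 * (1 - a0) * (t + \<omega> ^ 2)))"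
    proof
      fix t
      have "(\<Sum>i\<le>1. (deriv^^i) z t0 * (t - t0)^i / fact i) = z t0 + deriv z t0 * (t - t0)"
        by simp
      then show "z t - (\<Sum>i\<le>1. (deriv^^i) z t0 * (t - t0)^i / fact i) = z t - ((2 * \<omega> + 1) / 3 * a2 - a2 / 3 * (1 - a0) * (t + \<omega> ^ 2))"
        using zt0 dz0 by (simp add: t0_def z0_def)
    qed
    moreover have "(\<lambda>t. (t - t0)^(Suc 1)) = (\<lambda>t. (t + \<omega> ^ 2) ^ 2)"
      by (simp add: t0_def numeral_2_eq_2)
    ultimately show ?thesis by (simp add: t0_def)
  qed
  define h where "h s = 1 - 1 / s" for s :: complex
  have ht0: "h t0 = t0"
  proof -
    have "1 / t0 = 1 - t0" using tt t0nz by (simp add: field_simps algebra_simps)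
    then show ?thesis by (simp add: h_def)
  qed
  have conth: "isCont h t0" unfolding h_def using t0nz by (intro continuous_intros) auto
  have conty: "isCont y t0"
    using holomorphic_on_imp_continuous_on[OF hol(1)] S(1) t0S continuous_on_eq_continuous_at by blast
  have limh: "filterlim h (nhds t0) (nhds t0)"
    using conth ht0 by (simp add: tendsto_nhds_iff isCont_def)
  have limyh: "filterlim (\<lambda>s. y (h s)) (nhds t0) (nhds t0)"
  proof -
    have "isCont (\<lambda>s. y (h s)) t0" using conth conty ht0 using continuous_at_compose[OF conth, of y] by (simp add: comp_def)
    then show ?thesis using ht0 yt0 by (simp add: tendsto_nhds_iff isCont_def)
  qed
  have evU: "\<forall>\<^sub>F s in nhds t0. s \<in> S \<and> s \<noteq> 0 \<and> s \<noteq> 1 \<and> h s \<in> S \<and> y (h s) \<noteq> 1"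
  proof -
    have e1: "\<forall>\<^sub>F s in nhds t0. h s \<in> S"
      using eventually_compose_filterlim[OF eventually_nhds_in_open[OF S(1) t0S] limh] .
    have e2: "\<forall>\<^sub>F s in nhds t0. y (h s) \<noteq> 1"
      using eventually_compose_filterlim[OF t1_space_nhds[OF t0nz(2)] limyh] .
    show ?thesis
      using eventually_nhds_in_open[OF S(1) t0S] t1_space_nhds[OF t0nz(1)] t1_space_nhds[OF t0nz(2)] e1 e2
      by eventually_elim auto
  qed
  then obtain U where U: "open U" "t0 \<in> U" "\<And>s. s \<in> U \<Longrightarrow> s \<in> S \<and> s \<noteq> 0 \<and> s \<noteq> 1 \<and> h s \<in> S \<and> y (h s) \<noteq> 1"
    unfolding eventually_nhds by blast
  define Y where "Y s = 1 / (1 - y (h s))" for s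
  define Z where "Z s = (1 - y (h s))^2 * z (h s) - a2 * (1 - y (h s))" for s
  define Yp where "Yp s = deriv y (h s) / s^2 / (1 - y (h s))^2" for s
  define Zp where "Zp s = -2 * (1 - y (h s)) * (deriv y (h s) / s^2) * z (h s)
      + (1 - y (h s))^2 * (deriv z (h s) / s^2) + a2 * (deriv y (h s) / s^2)" for s
  have derYZ: "(Y has_field_derivative Yp s) (at s) \<and> (Z has_field_derivative Zp s) (at s)" if sU: "s \<in> U" for s
  proof -
    have sS: "s \<noteq> 0" "h s \<in> S" "y (h s) \<noteq> 1" using U(3)[OF sU] by auto
    have hd: "(h has_field_derivative 1 / s^2) (at s)"
      unfolding h_def[abs_def] using sS(1) by (rule deriv_h)
    have yh: "((\<lambda>s. y (h s)) has_field_derivative deriv y (h s) * (1 / s^2)) (at s)"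
      by (rule DERIV_chain2[OF Dy(1)[OF sS(2)] hd])
    have zh: "((\<lambda>s. z (h s)) has_field_derivative deriv z (h s) * (1 / s^2)) (at s)"
      by (rule DERIV_chain2[OF Dy(2)[OF sS(2)] hd])
    have c: "1 - y (h s) \<noteq> 0" using sS by simp
    have "(Y has_field_derivative Yp s) (at s)"
      using deriv_Y[OF yh c] unfolding Y_def[abs_def] Yp_def by simp
    moreover have "(Z has_field_derivative Zp s) (at s)"
      using deriv_Z[OF yh zh, of a2] unfolding Z_def[abs_def] Zp_def by simp
    ultimately show ?thesis by blast
  qed
  have holYZ: "Y holomorphic_on U" "Z holomorphic_on U"
    using derYZ U(1) by (auto simp: holomorphic_on_open)
  have odeY: "\<forall>s\<in>U. s * (s - 1) * deriv Y s = Hy a0 a3 a3 s (Y s) (Z s)"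
   and odeZ: "\<forall>s\<in>U. s * (s - 1) * deriv Z s = Hz a0 a3 a2 a3 a3 s (Y s) (Z s)"
  proof (safe)
    fix s assume sU: "s \<in> U"
    have sS: "s \<noteq> 0" "s \<noteq> 1" "h s \<in> S" "y (h s) \<noteq> 1" using U(3)[OF sU] by auto
    have c: "1 - y (h s) \<noteq> 0" using sS by simp
    have dY: "deriv Y s = Yp s" and dZ: "deriv Z s = Zp s" using derYZ[OF sU] by (auto intro: DERIV_imp_deriv)
    have e: "1 - (1 - y (h s)) = y (h s)" by simp
    have yp0: "h s * (h s - 1) * deriv y (h s) = Hy a0 a3 a3 (h s) (y (h s)) (z (h s))"
      using odey sS(3) by blast
    have zp0: "h s * (h s - 1) * deriv z (h s) = Hz a0 a3 a2 a3 a3 (h s) (y (h s)) (z (h s))"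
      using odez sS(3) by blast
    have yp: "(1 - 1/s) * ((1 - 1/s) - 1) * deriv y (h s) = Hy a0 a3 a3 (1 - 1/s) (1 - (1 - y (h s))) (z (h s))"
      by (unfold h_def[symmetric] e) (rule yp0)
    have zp: "(1 - 1/s) * ((1 - 1/s) - 1) * deriv z (h s) = Hz a0 a3 a2 a3 a3 (1 - 1/s) (1 - (1 - y (h s))) (z (h s))"
      by (unfold h_def[symmetric] e) (rule zp0)
    show "s * (s - 1) * deriv Y s = Hy a0 a3 a3 s (Y s) (Z s)"
      unfolding dY Yp_def Y_def Z_def by (rule alg_symY[OF sS(1,2) c a yp])
    show "s * (s - 1) * deriv Z s = Hz a0 a3 a2 a3 a3 s (Y s) (Z s)"
      unfolding dZ Zp_def Y_def Z_def by (rule alg_symZ[OF sS(1,2) c a yp zp])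
  qed
  have holU: "y holomorphic_on U" "z holomorphic_on U"
    using hol U(3) by (auto intro: holomorphic_on_subset)
  have Y0: "Y t0 = y t0"
  proof -
    have "t0 * (1 - t0) = 1" using tt by (simp add: algebra_simps)
    moreover have "1 - t0 \<noteq> 0" using t0nz(2) by simp
    ultimately have "1 / (1 - t0) = t0" by (simp add: divide_eq_eq)
    then show ?thesis by (simp add: Y_def ht0 yt0)
  qed
  have Z0: "Z t0 = z t0"
    unfolding Z_def ht0 yt0 zt0 unfolding t0_def z0_def by (rule alg_Z0[OF w])
  have evyz: "\<forall>\<^sub>F s in nhds t0. y s = Y s \<and> z s = Z s"
    by (rule uniq[OF U(1,2) t0nz holU(1) holYZ(1) holU(2) holYZ(2)])
      (use odey odez odeY odeZ U(3) Y0 Z0 in auto)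
  define k where "k t = 1 / (1 - t)" for t :: complex
  have limk: "filterlim k (nhds t0) (nhds t0)"
  proof -
    have "isCont k t0" unfolding k_def using t0nz by (intro continuous_intros) auto
    moreover have "k t0 = t0"
    proof -
      have "t0 * (1 - t0) = 1" using tt by (simp add: algebra_simps)
      moreover have "1 - t0 \<noteq> 0" using t0nz(2) by simp
      ultimately show ?thesis by (simp add: k_def divide_eq_eq)
    qed
    ultimately show ?thesis by (simp add: tendsto_nhds_iff isCont_def)
  qed
  have part3: "\<forall>\<^sub>F t in nhds t0. y (1 / (1 - t)) = 1 / (1 - y t) \<and>
           z (1 / (1 - t)) = - (1 - y t) * (- z t * (1 - y t) + a2)"
    using eventually_compose_filterlim[OF evyz limk] t1_space_nhds[OF t0nz(2)]
  proof eventually_elim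
    case (elim t)
    have hk: "h (k t) = t" using elim(2) by (simp add: h_def k_def)
    have 1: "y (k t) = 1 / (1 - y t)" using elim(1) hk by (simp add: Y_def)
    have "z (k t) = (1 - y t)^2 * z t - a2 * (1 - y t)" using elim(1) hk by (simp add: Z_def)
    also have "\<dots> = - (1 - y t) * (- z t * (1 - y t) + a2)" by (simp add: algebra_simps power2_eq_square)
    finally show ?case using 1 by (simp add: k_def)
  qed
  show ?thesis using part1 part2 part3 by (simp add: t0_def)
qed

end
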